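(* Let $h,n\geq2$ and let $F$ be a social preference function. Then: (i) $G(F)$ is a subgroup of $G$; (ii) $G_1(F)$ and $G_2(F)$ are subgroups of $G(F)$, with $G_1(F)\leq S_h\times\{id\}$ and $G_2(F)\leq\{id\}\times S_n$; (iii) $\langle G_1(F),G_2(F)\rangle=G_1(F)\times G_2(F)\leq G(F)$, and there exist a pair $(h,n)$ and a social preference function $F$ for which this inclusion is strict; (iv) $G(F)=G_1(F)\times G_2(F)$ if and only if $G(F)=\pi_1(G(F))\times\pi_2(G(F))$, where $\pi_1,\pi_2$ are the projections of $G$ onto $S_h$ and $S_n$; (v) if $G(F)\leq S_h\times\{id\}$ then $G(F)=G_1(F)$, and if $G(F)\leq\{id\}\times S_n$ then $G(F)=G_2(F)$.
   Context: Permutations compose as $(\sigma\tau)(x)=\sigma(\tau(x))$. Let $G=S_h\times S_n$ and $\mathcal{P}=(S_n)^h$ (preference profiles), with $G$ acting by $(p^{(\varphi,\psi)})_i=\psi\,p_{\varphi^{-1}(i)}$. A social preference function is any $F:\mathcal{P}\to S_n$. Its symmetry group is $G(F)=\{(\varphi,\psi)\in G: F(p^{(\varphi,\psi)})=\psi F(p)\ \forall p\in\mathcal{P}\}$, its anonymity group is $G_1(F)=\{(\varphi,id)\in G: F(p^{(\varphi,id)})=F(p)\ \forall p\}$ and its neutrality group is $G_2(F)=\{(id,\psi)\in G: F(p^{(id,\psi)})=\psi F(p)\ \forall p\}$. *)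

theory Defs
  imports "HOL-Algebra.Algebra"
begin

definition GG :: "nat \<Rightarrow> nat \<Rightarrow> ((nat \<Rightarrow> nat) \<times> (nat \<Rightarrow> nat)) monoid" where
  "GG h n = DirProd (sym_group h) (sym_group n)"

definition profiles :: "nat \<Rightarrow> nat \<Rightarrow> (nat \<Rightarrow> (nat \<Rightarrow> nat)) set" where
  "profiles h n = {1..h} \<rightarrow>\<^sub>E carrier (sym_group n)"

definition act :: "nat \<Rightarrow> (nat \<Rightarrow> nat) \<times> (nat \<Rightarrow> nat) \<Rightarrow> (nat \<Rightarrow> (nat \<Rightarrow> nat)) \<Rightarrow> (nat \<Rightarrow> (nat \<Rightarrow> nat))" where
  "act h g p = (\<lambda>i\<in>{1..h}. snd g \<circ> p (inv_into UNIV (fst g) i))"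

definition spf :: "nat \<Rightarrow> nat \<Rightarrow> ((nat \<Rightarrow> (nat \<Rightarrow> nat)) \<Rightarrow> (nat \<Rightarrow> nat)) \<Rightarrow> bool" where
  "spf h n F \<longleftrightarrow> F \<in> profiles h n \<rightarrow> carrier (sym_group n)"

definition symG where
  "symG h n F = {(\<phi>, \<psi>) \<in> carrier (GG h n).
      \<forall>p\<in>profiles h n. F (act h (\<phi>, \<psi>) p) = \<psi> \<circ> F p}"

definition anonG where
  "anonG h n F = {(\<phi>, \<psi>) \<in> carrier (GG h n). \<psi> = id \<and>
      (\<forall>p\<in>profiles h n. F (act h (\<phi>, id) p) = F p)}"

definition neutG where
  "neutG h n F = {(\<phi>, \<psi>) \<in> carrier (GG h n). \<phi> = id \<and>
      (\<forall>p\<in>profiles h n. F (act h (id, \<psi>) p) = \<psi> \<circ> F p)}"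

end

theory Submission
  imports Defs
begin


lemma GG_group: "group (GG h n)"
  unfolding GG_def by (intro DirProd_group sym_group_is_group)

lemma GG_carrier: "carrier (GG h n) = {p. p permutes {1..h}} \<times> {p. p permutes {1..n}}"
  unfolding GG_def by (simp add: sym_group_def)

lemma GG_mult: "(a, b) \<otimes>\<^bsub>GG h n\<^esub> (c, d) = (a \<circ> c, b \<circ> d)"
  unfolding GG_def by (simp add: sym_group_def)

lemma GG_one: "\<one>\<^bsub>GG h n\<^esub> = (id, id)"
  unfolding GG_def by (simp add: sym_group_def)

lemma GG_inv: "(a, b) \<in> carrier (GG h n) \<Longrightarrow> m_inv (GG h n) (a, b) = (inv' a, inv' b)"
  unfolding GG_def
  by (subst inv_DirProd) (auto simp: sym_group_is_group)

lemma act_profiles: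
  assumes g: "g \<in> carrier (GG h n)" and p: "p \<in> profiles h n"
  shows "act h g p \<in> profiles h n"
proof -
  obtain a b where gab: "g = (a, b)" by fastforce
  have a: "a permutes {1..h}" and b: "b permutes {1..n}" using g gab by (auto simp: GG_carrier)
  have "p (inv_into UNIV a i) permutes {1..n}" if "i \<in> {1..h}" for i
  proof -
    have "inv' a i \<in> {1..h}" using that by (rule permutes_in_image[OF permutes_inv[OF a], THEN iffD2])
    then show ?thesis using p by (auto simp: profiles_def sym_group_def)
  qed
  then show ?thesis using b unfolding act_def profiles_def gab
    by (auto simp: sym_group_def intro: permutes_compose)
qed

lemma act_one:
  assumes p: "p \<in> profiles h n"
  shows "act h (id, id) p = p"
proof
  fix i show "act h (id, id) p i = p i"
    using p unfolding act_def profiles_def by (cases "i \<in> {1..h}") (auto simp: PiE_def extensional_def)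
qed

lemma act_mult:
  assumes g1: "g1 \<in> carrier (GG h n)" and g2: "g2 \<in> carrier (GG h n)" and p: "p \<in> profiles h n"
  shows "act h (g1 \<otimes>\<^bsub>GG h n\<^esub> g2) p = act h g1 (act h g2 p)"
proof -
  obtain a1 b1 where g1ab: "g1 = (a1, b1)" by fastforce
  obtain a2 b2 where g2ab: "g2 = (a2, b2)" by fastforce
  have a1: "a1 permutes {1..h}" using g1 g1ab by (auto simp: GG_carrier)
  have a2: "a2 permutes {1..h}" using g2 g2ab by (auto simp: GG_carrier)
  have inv12: "inv' (a1 \<circ> a2) = inv' a2 \<circ> inv' a1"
    using a1 a2 by (simp add: o_inv_distrib permutes_bij)
  have *: "inv' a1 i \<in> {1..h}" if "i \<in> {1..h}" for i
    using that by (rule permutes_in_image[OF permutes_inv[OF a1], THEN iffD2])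
  show ?thesis unfolding g1ab g2ab GG_mult
  proof
    fix i
    show "act h (a1 \<circ> a2, b1 \<circ> b2) p i = act h (a1, b1) (act h (a2, b2) p) i"
    proof (cases "i \<in> {1..h}")
      case True
      then show ?thesis using *[OF True] unfolding act_def by (simp add: inv12 o_assoc)
    next
      case False
      then show ?thesis by (simp add: act_def del: atLeastAtMost_iff)
    qed
  qed
qed




lemma symG_mem: "(a, b) \<in> symG h n F \<longleftrightarrow> (a, b) \<in> carrier (GG h n) \<and>
   (\<forall>p\<in>profiles h n. F (act h (a, b) p) = b \<circ> F p)"
  by (simp add: symG_def)

lemma one_symG: "(id, id) \<in> symG h n F"
  by (auto simp: symG_mem GG_carrier permutes_id act_one)

lemma symG_subgroup: "subgroup (symG h n F) (GG h n)"
proof -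
  interpret G: group "GG h n" by (rule GG_group)
  show ?thesis
  proof (rule G.subgroupI)
    show "symG h n F \<subseteq> carrier (GG h n)" by (auto simp: symG_def)
    show "symG h n F \<noteq> {}" using one_symG by blast
  next
    fix g assume g: "g \<in> symG h n F"
    obtain a b where gab: "g = (a, b)" by fastforce
    have gc: "g \<in> carrier (GG h n)" using g by (auto simp: symG_def)
    have b: "b permutes {1..n}" using gc gab by (auto simp: GG_carrier)
    have ig: "m_inv (GG h n) g = (inv' a, inv' b)" using gc gab GG_inv by simp
    have igc: "m_inv (GG h n) g \<in> carrier (GG h n)" using gc by simp
    have "F (act h (inv' a, inv' b) p) = inv' b \<circ> F p" if p: "p \<in> profiles h n" for p
    proof -
      define q where "q = act h (m_inv (GG h n) g) p"
      have q: "q \<in> profiles h n" unfolding q_def using act_profiles igc p by blast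
      have "act h g q = act h (g \<otimes>\<^bsub>GG h n\<^esub> m_inv (GG h n) g) p"
        unfolding q_def using act_mult[OF gc igc p] by simp
      also have "\<dots> = p" using gc act_one[OF p] by (simp add: GG_one)
      finally have "act h g q = p" .
      then have "F p = b \<circ> F q" using g q gab by (auto simp: symG_mem)
      then have "inv' b \<circ> F p = (inv' b \<circ> b) \<circ> F q" by (simp add: o_assoc)
      also have "\<dots> = F q" using permutes_inv_o(2)[OF b] by simp
      finally show ?thesis unfolding q_def ig by simp
    qed
    then show "m_inv (GG h n) g \<in> symG h n F" using igc ig by (auto simp: symG_mem)
  next
    fix g1 g2 assume g1: "g1 \<in> symG h n F" and g2: "g2 \<in> symG h n F"
    obtain a1 b1 where g1ab: "g1 = (a1, b1)" by fastforce
    obtain a2 b2 where g2ab: "g2 = (a2, b2)" by fastforce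
    have g1c: "g1 \<in> carrier (GG h n)" using g1 by (auto simp: symG_def)
    have g2c: "g2 \<in> carrier (GG h n)" using g2 by (auto simp: symG_def)
    have "F (act h (g1 \<otimes>\<^bsub>GG h n\<^esub> g2) p) = (b1 \<circ> b2) \<circ> F p" if p: "p \<in> profiles h n" for p
    proof -
      have "F (act h (g1 \<otimes>\<^bsub>GG h n\<^esub> g2) p) = F (act h g1 (act h g2 p))"
        using act_mult[OF g1c g2c p] by simp
      also have "\<dots> = b1 \<circ> F (act h g2 p)"
        using g1 g1ab act_profiles[OF g2c p] by (auto simp: symG_mem)
      also have "\<dots> = b1 \<circ> (b2 \<circ> F p)"
        using g2 g2ab p by (auto simp: symG_mem)
      finally show ?thesis by (simp add: o_assoc)
    qed
    moreover have "g1 \<otimes>\<^bsub>GG h n\<^esub> g2 \<in> carrier (GG h n)" using g1c g2c by simp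
    ultimately show "g1 \<otimes>\<^bsub>GG h n\<^esub> g2 \<in> symG h n F"
      unfolding g1ab g2ab GG_mult by (auto simp: symG_mem)
  qed
qed

lemma sub_snd:
  assumes H: "subgroup H (GG h n)"
  shows "subgroup {g\<in>H. snd g = id} (GG h n)"
proof -
  interpret G: group "GG h n" by (rule GG_group)
  show ?thesis
  proof (rule G.subgroupI)
    show "{g\<in>H. snd g = id} \<subseteq> carrier (GG h n)" using subgroup.subset[OF H] by auto
    show "{g\<in>H. snd g = id} \<noteq> {}" using subgroup.one_closed[OF H] by (auto simp: GG_one intro!: exI[of _ id])
  next
    fix g assume g: "g \<in> {g\<in>H. snd g = id}"
    obtain a where ga: "g = (a, id)" using g by (cases g) auto
    have gc: "g \<in> carrier (GG h n)" using g subgroup.subset[OF H] by auto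
    have "m_inv (GG h n) g = (inv' a, id)" using GG_inv[of a id] gc ga by (simp add: inv_id)
    moreover have "m_inv (GG h n) g \<in> H" using subgroup.m_inv_closed[OF H] g by blast
    ultimately show "m_inv (GG h n) g \<in> {g\<in>H. snd g = id}" by simp
  next
    fix g1 g2 assume g1: "g1 \<in> {g\<in>H. snd g = id}" and g2: "g2 \<in> {g\<in>H. snd g = id}"
    obtain a1 where ga1: "g1 = (a1, id)" using g1 by (cases g1) auto
    obtain a2 where ga2: "g2 = (a2, id)" using g2 by (cases g2) auto
    show "g1 \<otimes>\<^bsub>GG h n\<^esub> g2 \<in> {g\<in>H. snd g = id}"
      using subgroup.m_closed[OF H] g1 g2 ga1 ga2 by (auto simp: GG_mult) (metis comp_id)
  qed
qed

lemma sub_fst: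
  assumes H: "subgroup H (GG h n)"
  shows "subgroup {g\<in>H. fst g = id} (GG h n)"
proof -
  interpret G: group "GG h n" by (rule GG_group)
  show ?thesis
  proof (rule G.subgroupI)
    show "{g\<in>H. fst g = id} \<subseteq> carrier (GG h n)" using subgroup.subset[OF H] by auto
    show "{g\<in>H. fst g = id} \<noteq> {}" using subgroup.one_closed[OF H] by (auto simp: GG_one intro!: exI[of _ id])
  next
    fix g assume g: "g \<in> {g\<in>H. fst g = id}"
    obtain a where ga: "g = (id, a)" using g by (cases g) auto
    have gc: "g \<in> carrier (GG h n)" using g subgroup.subset[OF H] by auto
    have "m_inv (GG h n) g = (id, inv' a)" using GG_inv[of id a] gc ga by (simp add: inv_id)
    moreover have "m_inv (GG h n) g \<in> H" using subgroup.m_inv_closed[OF H] g by blast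
    ultimately show "m_inv (GG h n) g \<in> {g\<in>H. fst g = id}" by simp
  next
    fix g1 g2 assume g1: "g1 \<in> {g\<in>H. fst g = id}" and g2: "g2 \<in> {g\<in>H. fst g = id}"
    obtain a1 where ga1: "g1 = (id, a1)" using g1 by (cases g1) auto
    obtain a2 where ga2: "g2 = (id, a2)" using g2 by (cases g2) auto
    show "g1 \<otimes>\<^bsub>GG h n\<^esub> g2 \<in> {g\<in>H. fst g = id}"
      using subgroup.m_closed[OF H] g1 g2 ga1 ga2 by (auto simp: GG_mult) (metis comp_id)
  qed
qed

lemma anonG_eq: "anonG h n F = {g \<in> symG h n F. snd g = id}"
  by (auto simp: anonG_def symG_def)

lemma neutG_eq: "neutG h n F = {g \<in> symG h n F. fst g = id}"
  by (auto simp: neutG_def symG_def)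

lemma prod_eq: "anonG h n F <#>\<^bsub>GG h n\<^esub> neutG h n F =
   {g. (fst g, id) \<in> symG h n F \<and> (id, snd g) \<in> symG h n F}"
proof
  show "anonG h n F <#>\<^bsub>GG h n\<^esub> neutG h n F \<subseteq> {g. (fst g, id) \<in> symG h n F \<and> (id, snd g) \<in> symG h n F}"
    unfolding set_mult_def anonG_eq neutG_eq by (auto simp: GG_mult)
next
  show "{g. (fst g, id) \<in> symG h n F \<and> (id, snd g) \<in> symG h n F} \<subseteq> anonG h n F <#>\<^bsub>GG h n\<^esub> neutG h n F"
  proof
    fix g assume g: "g \<in> {g. (fst g, id) \<in> symG h n F \<and> (id, snd g) \<in> symG h n F}"
    obtain a b where gab: "g = (a, b)" by fastforce
    have "g = (a, id) \<otimes>\<^bsub>GG h n\<^esub> (id, b)" using gab by (simp add: GG_mult)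
    moreover have "(a, id) \<in> anonG h n F" "(id, b) \<in> neutG h n F"
      using g gab by (auto simp: anonG_eq neutG_eq)
    ultimately show "g \<in> anonG h n F <#>\<^bsub>GG h n\<^esub> neutG h n F"
      unfolding set_mult_def by blast
  qed
qed




definition rot :: "nat \<Rightarrow> nat \<Rightarrow> nat" where
  "rot k i = (if i \<in> {1..4} then (i - 1 + k) mod 4 + 1 else i)"

definition Kf :: "nat \<Rightarrow> nat \<Rightarrow> nat" where
  "Kf x y = (let a = x - 1; b = y - 1; d = (a + 4 - b) mod 4 in
     if d = 0 \<or> d = 1 then a else if d = 3 then b else if even a then a else b)"

definition Fex :: "(nat \<Rightarrow> nat \<Rightarrow> nat) \<Rightarrow> nat \<Rightarrow> nat" where
  "Fex p = rot (Kf (p 1 1) (p 2 1))"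

lemma rot_in: "i \<in> {1..4} \<Longrightarrow> rot k i \<in> {1..4}"
  by (simp add: rot_def)

lemma rot_comp: "rot a \<circ> rot b = rot (a + b)"
proof
  fix i show "(rot a \<circ> rot b) i = rot (a + b) i"
  proof (cases "i \<in> {1..4}")
    case True
    have "rot a (rot b i) = ((i - 1 + b) mod 4 + a) mod 4 + 1"
      using True by (simp add: rot_def)
    also have "\<dots> = (i - 1 + (a + b)) mod 4 + 1" by presburger
    also have "\<dots> = rot (a + b) i" by (simp only: rot_def True if_True)
    finally show ?thesis by (simp only: comp_apply)
  next
    case False
    then show ?thesis by (simp add: rot_def del: atLeastAtMost_iff)
  qed
qed

lemma rot_mod: "rot (a mod 4) = rot a"
proof
  fix i
  have "(i - 1 + a mod 4) mod 4 = (i - 1 + a) mod 4" by presburger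
  then show "rot (a mod 4) i = rot a i" unfolding rot_def by presburger
qed

lemma rot_0: "rot 0 = id"
proof
  fix i show "rot 0 i = id i"
    by (cases "i \<in> {1..4}") (auto simp: rot_def)
qed

lemma rot_inv: "rot (4 - k mod 4) (rot k i) = i"
proof -
  have "(4 - k mod 4 + k) mod 4 = 0" by presburger
  then have "rot (4 - k mod 4 + k) = id" by (metis rot_mod rot_0)
  then show ?thesis by (metis comp_apply id_apply rot_comp)
qed

lemma rot_inv2: "rot k (rot (4 - k mod 4) i) = i"
proof -
  have "(k + (4 - k mod 4)) mod 4 = 0" by presburger
  then have "rot (k + (4 - k mod 4)) = id" by (metis rot_mod rot_0)
  then show ?thesis by (metis comp_apply id_apply rot_comp)
qed

lemma rot_permutes: "rot k permutes {1..4}"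
proof (rule bij_imp_permutes)
  show "bij_betw (rot k) {1..4} {1..4}"
  proof (rule bij_betw_byWitness[where f' = "rot (4 - k mod 4)"])
    show "rot k ` {1..4} \<subseteq> {1..4}" using rot_in by blast
    show "rot (4 - k mod 4) ` {1..4} \<subseteq> {1..4}" using rot_in by blast
  qed (auto simp: rot_inv rot_inv2 simp del: atLeastAtMost_iff)
  show "\<And>x. x \<notin> {1..4} \<Longrightarrow> rot k x = x" by (simp add: rot_def del: atLeastAtMost_iff)
qed

lemma rot_permutes': "rot k permutes {Suc 0..4}"
  using rot_permutes by simp

lemma Kf_key:
  assumes "x \<in> {1..4}" "y \<in> {1..4}"
  shows "Kf (rot 1 y) (rot 1 x) mod 4 = (1 + Kf x y) mod 4"
proof -
  have x: "x = 1 \<or> x = 2 \<or> x = 3 \<or> x = 4" using assms by auto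
  have y: "y = 1 \<or> y = 2 \<or> y = 3 \<or> y = 4" using assms by auto
  from x y show ?thesis by (elim disjE) (simp_all add: rot_def Kf_def Let_def)
qed

lemma Fex_spf: "spf 2 4 Fex"
  unfolding spf_def Fex_def by (auto simp: sym_group_def rot_permutes rot_permutes')

lemma tau_inv: "inv_into UNIV (transpose (1::nat) 2) = transpose 1 2"
  using inv_transpose_eq by metis

lemma ex_in: "(transpose 1 2, rot 1) \<in> symG 2 4 Fex"
proof -
  have c: "(transpose 1 2, rot 1) \<in> carrier (GG 2 4)"
    by (auto simp: GG_carrier rot_permutes rot_permutes' permutes_swap_id)
  have "Fex (act 2 (transpose 1 2, rot 1) p) = rot 1 \<circ> Fex p" if p: "p \<in> profiles 2 4" for p
  proof -
    have p1: "p 1 permutes {1..4}" and p2: "p 2 permutes {1..4}"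
      using p by (auto simp: profiles_def sym_group_def)
    have x: "p 1 1 \<in> {1..4}" using permutes_in_image[OF p1, of 1] by simp
    have y: "p 2 1 \<in> {1..4}" using permutes_in_image[OF p2, of 1] by simp
    have a1: "act 2 (transpose 1 2, rot 1) p 1 1 = rot 1 (p 2 1)"
      by (simp add: act_def tau_inv)
    have a2: "act 2 (transpose 1 2, rot 1) p 2 1 = rot 1 (p 1 1)"
      by (simp add: act_def tau_inv)
    have "Fex (act 2 (transpose 1 2, rot 1) p) = rot (Kf (rot 1 (p 2 1)) (rot 1 (p 1 1)))"
      unfolding Fex_def a1 a2 ..
    also have "\<dots> = rot (Kf (rot 1 (p 2 1)) (rot 1 (p 1 1)) mod 4)" by (simp add: rot_mod)
    also have "\<dots> = rot ((1 + Kf (p 1 1) (p 2 1)) mod 4)" using Kf_key[OF x y] by simp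
    also have "\<dots> = rot 1 \<circ> Fex p" by (simp add: rot_mod rot_comp Fex_def)
    finally show ?thesis .
  qed
  then show ?thesis using c by (simp add: symG_mem)
qed

lemma ex_notin: "(transpose 1 2, id) \<notin> symG 2 4 Fex"
proof
  assume a: "(transpose 1 2, id) \<in> symG 2 4 Fex"
  define p0 :: "nat \<Rightarrow> nat \<Rightarrow> nat" where "p0 = (\<lambda>i\<in>{1..2}. if i = 1 then id else rot 2)"
  have p0: "p0 \<in> profiles 2 4"
    unfolding p0_def profiles_def by (auto simp: sym_group_def rot_permutes rot_permutes' permutes_id)
  have "Fex (act 2 (transpose 1 2, id) p0) = id \<circ> Fex p0" using a p0 by (simp add: symG_mem)
  then have "Fex (act 2 (transpose 1 2, id) p0) 1 = Fex p0 1" by simp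
  moreover have "Fex (act 2 (transpose 1 2, id) p0) 1 = 3"
  proof -
    have e1: "act 2 (transpose 1 2, id) p0 1 = rot 2" by (simp add: act_def tau_inv p0_def)
    have e2: "act 2 (transpose 1 2, id) p0 2 = id" by (simp add: act_def tau_inv p0_def)
    have r: "rot 2 1 = 3" by (simp add: rot_def)
    have k: "Kf 3 1 = 2" by (simp add: Kf_def Let_def)
    show ?thesis unfolding Fex_def e1 e2 id_apply r k by simp
  qed
  moreover have "Fex p0 1 = 1"
  proof -
    have e1: "p0 1 = id" by (simp add: p0_def)
    have e2: "p0 2 = rot 2" by (simp add: p0_def)
    have r: "rot 2 1 = 3" by (simp add: rot_def)
    have k: "Kf 1 3 = 0" by (simp add: Kf_def Let_def)
    show ?thesis unfolding Fex_def e1 e2 id_apply r k rot_0 by simp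
  qed
  ultimately show False by simp
qed





lemma P_subgroup: "subgroup {g. (fst g, id) \<in> symG h n F \<and> (id, snd g) \<in> symG h n F} (GG h n)"
proof -
  interpret G: group "GG h n" by (rule GG_group)
  have S: "subgroup (symG h n F) (GG h n)" by (rule symG_subgroup)
  have Sc: "symG h n F \<subseteq> carrier (GG h n)" using subgroup.subset[OF S] .
  show ?thesis
  proof (rule G.subgroupI)
    show "{g. (fst g, id) \<in> symG h n F \<and> (id, snd g) \<in> symG h n F} \<subseteq> carrier (GG h n)"
      using Sc by (auto simp: GG_carrier)
    show "{g. (fst g, id) \<in> symG h n F \<and> (id, snd g) \<in> symG h n F} \<noteq> {}"
    proof -
      have "(id, id) \<in> {g. (fst g, id) \<in> symG h n F \<and> (id, snd g) \<in> symG h n F}"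
        using one_symG by simp
      then show ?thesis by blast
    qed
  next
    fix g assume g: "g \<in> {g. (fst g, id) \<in> symG h n F \<and> (id, snd g) \<in> symG h n F}"
    obtain a b where gab: "g = (a, b)" by fastforce
    have ai: "(a, id) \<in> symG h n F" and bi: "(id, b) \<in> symG h n F" using g gab by auto
    have ac: "(a, id) \<in> carrier (GG h n)" and bc: "(id, b) \<in> carrier (GG h n)" using ai bi Sc by auto
    have gc: "g \<in> carrier (GG h n)" using ac bc gab by (auto simp: GG_carrier)
    have "m_inv (GG h n) (a, id) = (inv' a, id)" using GG_inv[OF ac] by (simp add: inv_id)
    then have 1: "(inv' a, id) \<in> symG h n F" using subgroup.m_inv_closed[OF S ai] by simp
    have "m_inv (GG h n) (id, b) = (id, inv' b)" using GG_inv[OF bc] by (simp add: inv_id)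
    then have 2: "(id, inv' b) \<in> symG h n F" using subgroup.m_inv_closed[OF S bi] by simp
    show "m_inv (GG h n) g \<in> {g. (fst g, id) \<in> symG h n F \<and> (id, snd g) \<in> symG h n F}"
      using GG_inv[of a b] gc gab 1 2 by simp
  next
    fix g1 g2
    assume g1: "g1 \<in> {g. (fst g, id) \<in> symG h n F \<and> (id, snd g) \<in> symG h n F}"
       and g2: "g2 \<in> {g. (fst g, id) \<in> symG h n F \<and> (id, snd g) \<in> symG h n F}"
    obtain a1 b1 where g1ab: "g1 = (a1, b1)" by fastforce
    obtain a2 b2 where g2ab: "g2 = (a2, b2)" by fastforce
    have "(a1, id) \<otimes>\<^bsub>GG h n\<^esub> (a2, id) \<in> symG h n F"
      using g1 g2 g1ab g2ab subgroup.m_closed[OF S] by auto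
    then have 1: "(a1 \<circ> a2, id) \<in> symG h n F" by (simp add: GG_mult)
    have "(id, b1) \<otimes>\<^bsub>GG h n\<^esub> (id, b2) \<in> symG h n F"
      using g1 g2 g1ab g2ab subgroup.m_closed[OF S] by auto
    then have 2: "(id, b1 \<circ> b2) \<in> symG h n F" by (simp add: GG_mult)
    show "g1 \<otimes>\<^bsub>GG h n\<^esub> g2 \<in> {g. (fst g, id) \<in> symG h n F \<and> (id, snd g) \<in> symG h n F}"
      using 1 2 g1ab g2ab by (simp add: GG_mult)
  qed
qed



lemma P_sub_S: "anonG h n F <#>\<^bsub>GG h n\<^esub> neutG h n F \<subseteq> symG h n F"
proof
  fix g assume "g \<in> anonG h n F <#>\<^bsub>GG h n\<^esub> neutG h n F"
  then have g: "(fst g, id) \<in> symG h n F" "(id, snd g) \<in> symG h n F" by (auto simp: prod_eq)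
  have "(fst g, id) \<otimes>\<^bsub>GG h n\<^esub> (id, snd g) \<in> symG h n F"
    using subgroup.m_closed[OF symG_subgroup g] .
  then show "g \<in> symG h n F" by (simp add: GG_mult)
qed

lemma gen_eq: "generate (GG h n) (anonG h n F \<union> neutG h n F) = anonG h n F <#>\<^bsub>GG h n\<^esub> neutG h n F"
proof -
  interpret G: group "GG h n" by (rule GG_group)
  have AN: "anonG h n F \<union> neutG h n F \<subseteq> anonG h n F <#>\<^bsub>GG h n\<^esub> neutG h n F"
    by (subst prod_eq) (auto simp: anonG_eq neutG_eq one_symG)
  have ANc: "anonG h n F \<union> neutG h n F \<subseteq> carrier (GG h n)"
    unfolding anonG_eq neutG_eq using subgroup.subset[OF symG_subgroup] by auto
  show ?thesis
  proof
    show "generate (GG h n) (anonG h n F \<union> neutG h n F) \<subseteq> anonG h n F <#>\<^bsub>GG h n\<^esub> neutG h n F"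
      using G.generate_subgroup_incl[OF AN] P_subgroup unfolding prod_eq by blast
  next
    show "anonG h n F <#>\<^bsub>GG h n\<^esub> neutG h n F \<subseteq> generate (GG h n) (anonG h n F \<union> neutG h n F)"
    proof
      fix g assume "g \<in> anonG h n F <#>\<^bsub>GG h n\<^esub> neutG h n F"
      then have "(fst g, id) \<in> symG h n F" "(id, snd g) \<in> symG h n F"
        by (simp_all add: prod_eq)
      then have g: "(fst g, id) \<in> anonG h n F" "(id, snd g) \<in> neutG h n F"
        by (auto simp: anonG_eq neutG_eq)
      have "(fst g, id) \<in> generate (GG h n) (anonG h n F \<union> neutG h n F)"
        using g(1) by (blast intro: generate.incl)
      moreover have "(id, snd g) \<in> generate (GG h n) (anonG h n F \<union> neutG h n F)"
        using g(2) by (blast intro: generate.incl)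
      ultimately have "(fst g, id) \<otimes>\<^bsub>GG h n\<^esub> (id, snd g) \<in> generate (GG h n) (anonG h n F \<union> neutG h n F)"
        by (rule generate.eng)
      then show "g \<in> generate (GG h n) (anonG h n F \<union> neutG h n F)" by (simp add: GG_mult)
    qed
  qed
qed



lemma part_iv: "symG h n F = anonG h n F <#>\<^bsub>GG h n\<^esub> neutG h n F
        \<longleftrightarrow> symG h n F = fst ` symG h n F \<times> snd ` symG h n F"
proof
  assume e: "symG h n F = anonG h n F <#>\<^bsub>GG h n\<^esub> neutG h n F"
  have e': "g \<in> symG h n F \<longleftrightarrow> (fst g, id) \<in> symG h n F \<and> (id, snd g) \<in> symG h n F" for g
  proof -
    have "g \<in> symG h n F \<longleftrightarrow> g \<in> anonG h n F <#>\<^bsub>GG h n\<^esub> neutG h n F"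
      by (simp only: e[symmetric])
    also have "\<dots> \<longleftrightarrow> (fst g, id) \<in> symG h n F \<and> (id, snd g) \<in> symG h n F"
      by (simp only: prod_eq mem_Collect_eq)
    finally show ?thesis .
  qed
  show "symG h n F = fst ` symG h n F \<times> snd ` symG h n F"
  proof
    show "symG h n F \<subseteq> fst ` symG h n F \<times> snd ` symG h n F" by (rule subset_fst_snd)
    show "fst ` symG h n F \<times> snd ` symG h n F \<subseteq> symG h n F"
    proof
      fix g assume "g \<in> fst ` symG h n F \<times> snd ` symG h n F"
      then obtain a b where g: "g = (a, b)" and a: "a \<in> fst ` symG h n F" and b: "b \<in> snd ` symG h n F"
        by blast
      from a obtain g1 where g1: "g1 \<in> symG h n F" and a1: "a = fst g1" by blast
      from b obtain g2 where g2: "g2 \<in> symG h n F" and b2: "b = snd g2" by blast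
      have "(fst g1, id) \<in> symG h n F" using g1 e'[of g1] by blast
      moreover have "(id, snd g2) \<in> symG h n F" using g2 e'[of g2] by blast
      ultimately show "g \<in> symG h n F" using e'[of g] g a1 b2 by simp
    qed
  qed
next
  assume e: "symG h n F = fst ` symG h n F \<times> snd ` symG h n F"
  have e': "g \<in> symG h n F \<longleftrightarrow> g \<in> fst ` symG h n F \<times> snd ` symG h n F" for g
    by (simp only: e[symmetric])
  have "symG h n F \<subseteq> anonG h n F <#>\<^bsub>GG h n\<^esub> neutG h n F"
  proof
    fix g assume g: "g \<in> symG h n F"
    have i1: "id \<in> fst ` symG h n F" by (rule image_eqI[OF _ one_symG]) simp
    have i2: "id \<in> snd ` symG h n F" by (rule image_eqI[OF _ one_symG]) simp
    have "(fst g, id) \<in> fst ` symG h n F \<times> snd ` symG h n F"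
      "(id, snd g) \<in> fst ` symG h n F \<times> snd ` symG h n F" using g i1 i2 by auto
    then have "(fst g, id) \<in> symG h n F" "(id, snd g) \<in> symG h n F" using e' by blast+
    then show "g \<in> anonG h n F <#>\<^bsub>GG h n\<^esub> neutG h n F" by (simp add: prod_eq)
  qed
  then show "symG h n F = anonG h n F <#>\<^bsub>GG h n\<^esub> neutG h n F" using P_sub_S by blast
qed



theorem mainTheorem13:
  fixes h n :: nat and F :: "(nat \<Rightarrow> (nat \<Rightarrow> nat)) \<Rightarrow> (nat \<Rightarrow> nat)"
  assumes "2 \<le> h" and "2 \<le> n" and "spf h n F"
  shows "subgroup (symG h n F) (GG h n)
    \<and> subgroup (anonG h n F) ((GG h n)\<lparr>carrier := symG h n F\<rparr>)
    \<and> subgroup (neutG h n F) ((GG h n)\<lparr>carrier := symG h n F\<rparr>)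
    \<and> anonG h n F \<subseteq> carrier (sym_group h) \<times> {id}
    \<and> neutG h n F \<subseteq> {id} \<times> carrier (sym_group n)
    \<and> generate (GG h n) (anonG h n F \<union> neutG h n F) = anonG h n F <#>\<^bsub>GG h n\<^esub> neutG h n F
    \<and> anonG h n F <#>\<^bsub>GG h n\<^esub> neutG h n F \<subseteq> symG h n F
    \<and> (\<exists>h' n' F'. 2 \<le> h' \<and> 2 \<le> n' \<and> spf h' n' F' \<and>
         anonG h' n' F' <#>\<^bsub>GG h' n'\<^esub> neutG h' n' F' \<subset> symG h' n' F')
    \<and> (symG h n F = anonG h n F <#>\<^bsub>GG h n\<^esub> neutG h n F
        \<longleftrightarrow> symG h n F = fst ` symG h n F \<times> snd ` symG h n F)
    \<and> (symG h n F \<subseteq> carrier (sym_group h) \<times> {id} \<longrightarrow> symG h n F = anonG h n F)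
    \<and> (symG h n F \<subseteq> {id} \<times> carrier (sym_group n) \<longrightarrow> symG h n F = neutG h n F)"
proof -
  interpret G: group "GG h n" by (rule GG_group)
  have S: "subgroup (symG h n F) (GG h n)" by (rule symG_subgroup)
  have A: "subgroup (anonG h n F) (GG h n)" unfolding anonG_eq by (rule sub_snd[OF S])
  have N: "subgroup (neutG h n F) (GG h n)" unfolding neutG_eq by (rule sub_fst[OF S])
  have AS: "anonG h n F \<subseteq> symG h n F" by (auto simp: anonG_eq)
  have NS: "neutG h n F \<subseteq> symG h n F" by (auto simp: neutG_eq)
  have ex: "\<exists>h' n' F'. 2 \<le> h' \<and> 2 \<le> n' \<and> spf h' n' F' \<and>
         anonG h' n' F' <#>\<^bsub>GG h' n'\<^esub> neutG h' n' F' \<subset> symG h' n' F'"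
  proof (intro exI conjI)
    show "spf 2 4 Fex" by (rule Fex_spf)
    show "anonG 2 4 Fex <#>\<^bsub>GG 2 4\<^esub> neutG 2 4 Fex \<subset> symG 2 4 Fex"
    proof -
      have "(transpose 1 2, rot 1) \<notin> anonG 2 4 Fex <#>\<^bsub>GG 2 4\<^esub> neutG 2 4 Fex"
        using ex_notin by (simp add: prod_eq)
      then show ?thesis using P_sub_S ex_in by blast
    qed
  qed simp_all
  show ?thesis
  proof (intro conjI)
    show "subgroup (symG h n F) (GG h n)" by (rule S)
    show "subgroup (anonG h n F) ((GG h n)\<lparr>carrier := symG h n F\<rparr>)"
      by (rule G.subgroup_incl[OF A S AS])
    show "subgroup (neutG h n F) ((GG h n)\<lparr>carrier := symG h n F\<rparr>)"
      by (rule G.subgroup_incl[OF N S NS])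
    show "anonG h n F \<subseteq> carrier (sym_group h) \<times> {id}"
      by (auto simp: anonG_def GG_def)
    show "neutG h n F \<subseteq> {id} \<times> carrier (sym_group n)"
      by (auto simp: neutG_def GG_def)
    show "generate (GG h n) (anonG h n F \<union> neutG h n F) = anonG h n F <#>\<^bsub>GG h n\<^esub> neutG h n F"
      by (rule gen_eq)
    show "anonG h n F <#>\<^bsub>GG h n\<^esub> neutG h n F \<subseteq> symG h n F" by (rule P_sub_S)
    show "\<exists>h' n' F'. 2 \<le> h' \<and> 2 \<le> n' \<and> spf h' n' F' \<and>
         anonG h' n' F' <#>\<^bsub>GG h' n'\<^esub> neutG h' n' F' \<subset> symG h' n' F'" by (rule ex)
    show "(symG h n F = anonG h n F <#>\<^bsub>GG h n\<^esub> neutG h n F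
        \<longleftrightarrow> symG h n F = fst ` symG h n F \<times> snd ` symG h n F)" by (rule part_iv)
    show "symG h n F \<subseteq> carrier (sym_group h) \<times> {id} \<longrightarrow> symG h n F = anonG h n F"
      unfolding anonG_eq by auto
    show "symG h n F \<subseteq> {id} \<times> carrier (sym_group n) \<longrightarrow> symG h n F = neutG h n F"
      unfolding neutG_eq by auto
  qed
qed


end
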